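(* Let $\Omega\subset\mathbb{R}^n$ be a bounded smooth domain, $0<\alpha<1$, and let $\Lambda$ be the Schauder constant of the Laplacian on $\Omega$. Let $f=f(x,u,\nabla u)$ and let $\{u_i\}\subset C^{2,\alpha}(\Omega)$ be a Dirichlet iteration sequence relative to $f$ starting at $u_0=0$. Suppose there exists a bounded increasing function $\psi:[0,\infty)\to\mathbb{R}$ such that $|f(\cdot,u,\nabla u)|_\alpha\le\psi(|u|_{1,\alpha})$ for all $u\in C^{2,\alpha}(\Omega)$, and that $\Lambda\psi$ has a fixed point. Then $\{u_i\}$ is uniformly bounded in $C^{2,\alpha}(\Omega)$.
   Context: Hölder norms: $[f]_\alpha=\sup_{x\neq y}|f(y)-f(x)|/|y-x|^\alpha$, $|f|_\alpha=|f|_0+[f]_\alpha$, $|f|_{k,\alpha}=\sum_{|\beta|\le k}|\partial^\beta f|_0+\sum_{|\beta|=k}[\partial^\beta f]_\alpha$. The Schauder constant $\Lambda$ is a constant such that for every $g\in C^\alpha(\Omega)$ the solution $v\in C^{2,\alpha}(\Omega)$ of $\Delta v=g$ in $\Omega$, $v=0$ on $\partial\Omega$, satisfies $|v|_{2,\alpha}\le\Lambda|g|_\alpha$. A Dirichlet iteration sequence relative to $f$ starting at $\varphi$ is the sequence defined by $u_0=\varphi$ and, recursively, $u_{i+1}$ the solution of $\Delta u_{i+1}(x)=f(x,u_i(x),\nabla u_i(x))$ in $\Omega$, $u_{i+1}=0$ on $\partial\Omega$. *)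

theory Defs
  imports "HOL-Analysis.Analysis" "HOL-Library.Multiset"
begin

text \<open>Iterated partial derivatives along a list of directions (applied right to left).\<close>
fun dpart :: "'a::euclidean_space list \<Rightarrow> ('a \<Rightarrow> real) \<Rightarrow> 'a \<Rightarrow> real" where
  "dpart [] u = u"
| "dpart (b # bs) u = (\<lambda>x. frechet_derivative (dpart bs u) (at x) b)"

text \<open>Partial derivative for a multi-index, represented as a multiset of basis vectors.\<close>
definition mpart :: "'a::euclidean_space multiset \<Rightarrow> ('a \<Rightarrow> real) \<Rightarrow> 'a \<Rightarrow> real" where
  "mpart \<beta> u = dpart (SOME xs. mset xs = \<beta>) u"

definition mindices :: "nat \<Rightarrow> 'a::euclidean_space multiset set" where
  "mindices k = {\<beta>. set_mset \<beta> \<subseteq> Basis \<and> size \<beta> = k}"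

definition grad :: "('a::euclidean_space \<Rightarrow> real) \<Rightarrow> 'a \<Rightarrow> 'a" where
  "grad u x = (\<Sum>b\<in>Basis. dpart [b] u x *\<^sub>R b)"

definition lap :: "('a::euclidean_space \<Rightarrow> real) \<Rightarrow> 'a \<Rightarrow> real" where
  "lap u x = (\<Sum>b\<in>Basis. dpart [b, b] u x)"

definition supnorm :: "'a::euclidean_space set \<Rightarrow> ('a \<Rightarrow> real) \<Rightarrow> real" where
  "supnorm \<Omega> g = (SUP x\<in>\<Omega>. \<bar>g x\<bar>)"

definition hseminorm :: "'a::euclidean_space set \<Rightarrow> real \<Rightarrow> ('a \<Rightarrow> real) \<Rightarrow> real" where
  "hseminorm \<Omega> \<alpha> g =
     (SUP p\<in>{(x, y). x \<in> \<Omega> \<and> y \<in> \<Omega> \<and> x \<noteq> y}. \<bar>g (snd p) - g (fst p)\<bar> / dist (snd p) (fst p) powr \<alpha>)"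

definition hnorm :: "'a::euclidean_space set \<Rightarrow> nat \<Rightarrow> real \<Rightarrow> ('a \<Rightarrow> real) \<Rightarrow> real" where
  "hnorm \<Omega> k \<alpha> u =
     (\<Sum>j\<le>k. \<Sum>\<beta>\<in>mindices j. supnorm \<Omega> (mpart \<beta> u))
     + (\<Sum>\<beta>\<in>mindices k. hseminorm \<Omega> \<alpha> (mpart \<beta> u))"

definition holder_space :: "'a::euclidean_space set \<Rightarrow> nat \<Rightarrow> real \<Rightarrow> ('a \<Rightarrow> real) \<Rightarrow> bool" where
  "holder_space \<Omega> k \<alpha> u \<longleftrightarrow>
     (\<forall>bs. set bs \<subseteq> Basis \<and> length bs < k \<longrightarrow> (\<forall>x\<in>\<Omega>. dpart bs u differentiable (at x))) \<and>
     (\<forall>bs. set bs \<subseteq> Basis \<and> length bs \<le> k \<longrightarrow>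
         continuous_on \<Omega> (dpart bs u) \<and> bounded (dpart bs u ` \<Omega>)) \<and>
     (\<forall>bs. set bs \<subseteq> Basis \<and> length bs = k \<longrightarrow>
         (\<exists>C. \<forall>x\<in>\<Omega>. \<forall>y\<in>\<Omega>. \<bar>dpart bs u y - dpart bs u x\<bar> \<le> C * dist y x powr \<alpha>))"

definition smooth_fun :: "('a::euclidean_space \<Rightarrow> real) \<Rightarrow> bool" where
  "smooth_fun \<rho> \<longleftrightarrow> (\<forall>bs. set bs \<subseteq> Basis \<longrightarrow> (\<forall>x. dpart bs \<rho> differentiable (at x)))"

definition bounded_smooth_domain :: "'a::euclidean_space set \<Rightarrow> bool" where
  "bounded_smooth_domain \<Omega> \<longleftrightarrow> open \<Omega> \<and> connected \<Omega> \<and> bounded \<Omega> \<and> \<Omega> \<noteq> {} \<and>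
     (\<exists>\<rho>. smooth_fun \<rho> \<and> \<Omega> = {x. \<rho> x < 0} \<and> (\<forall>x. \<rho> x = 0 \<longrightarrow> grad \<rho> x \<noteq> 0))"

definition dirichlet_solution :: "'a::euclidean_space set \<Rightarrow> real \<Rightarrow> ('a \<Rightarrow> real) \<Rightarrow> ('a \<Rightarrow> real) \<Rightarrow> bool" where
  "dirichlet_solution \<Omega> \<alpha> g v \<longleftrightarrow> holder_space \<Omega> 2 \<alpha> v \<and> continuous_on (closure \<Omega>) v \<and>
     (\<forall>x\<in>\<Omega>. lap v x = g x) \<and> (\<forall>x\<in>frontier \<Omega>. v x = 0)"

definition schauder_constant :: "'a::euclidean_space set \<Rightarrow> real \<Rightarrow> real \<Rightarrow> bool" where
  "schauder_constant \<Omega> \<alpha> \<Lambda> \<longleftrightarrow>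
     (\<forall>g v. holder_space \<Omega> 0 \<alpha> g \<longrightarrow> dirichlet_solution \<Omega> \<alpha> g v \<longrightarrow>
        hnorm \<Omega> 2 \<alpha> v \<le> \<Lambda> * hnorm \<Omega> 0 \<alpha> g)"

definition dirichlet_iteration ::
  "'a::euclidean_space set \<Rightarrow> real \<Rightarrow> ('a \<Rightarrow> real \<Rightarrow> 'a \<Rightarrow> real) \<Rightarrow> ('a \<Rightarrow> real) \<Rightarrow> (nat \<Rightarrow> 'a \<Rightarrow> real) \<Rightarrow> bool" where
  "dirichlet_iteration \<Omega> \<alpha> f \<phi> u \<longleftrightarrow> u 0 = \<phi> \<and>
     (\<forall>i. dirichlet_solution \<Omega> \<alpha> (\<lambda>x. f x (u i x) (grad (u i) x)) (u (Suc i)))"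

end

theory Submission
  imports Defs
begin

lemma lin_expand:
  fixes l :: "'a::euclidean_space \<Rightarrow> real"
  assumes "linear l"
  shows "l h = (\<Sum>c\<in>Basis. (h \<bullet> c) * l c)"
  using Linear_Algebra.linear_componentwise[OF assms, of h 1] by simp

lemma deriv_repr:
  fixes f :: "'a::euclidean_space \<Rightarrow> real"
  assumes "f differentiable at x"
  shows "(f has_derivative (\<lambda>h. \<Sum>c\<in>Basis. (h \<bullet> c) * dpart [c] f x)) (at x)"
proof -
  have d: "(f has_derivative frechet_derivative f (at x)) (at x)"
    using assms frechet_derivative_works by blast
  have l: "linear (frechet_derivative f (at x))"
    using has_derivative_linear[OF d] .
  have eq: "frechet_derivative f (at x) = (\<lambda>h. \<Sum>c\<in>Basis. (h \<bullet> c) * dpart [c] f x)"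
    by (rule ext, subst lin_expand[OF l]) simp
  show ?thesis using d unfolding eq .
qed

lemma seg_mvt:
  fixes \<rho> :: "'a::euclidean_space \<Rightarrow> real"
  assumes der: "\<forall>z. (\<rho> has_derivative (\<lambda>h. h \<bullet> G z)) (at z)"
    and seg: "closed_segment a b \<subseteq> S" and bd: "\<forall>z\<in>S. G z \<bullet> (b - a) \<le> c"
  shows "\<rho> b \<le> \<rho> a + c"
proof -
  define \<phi> where "\<phi> t = \<rho> (a + t *\<^sub>R (b - a))" for t :: real
  have dphi: "(\<phi> has_real_derivative (G (a + t *\<^sub>R (b - a)) \<bullet> (b - a))) (at t)" for t
  proof -
    have "((\<lambda>t. a + t *\<^sub>R (b - a)) has_derivative (\<lambda>s. s *\<^sub>R (b - a))) (at t)"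
      by (auto intro!: derivative_eq_intros)
    from has_derivative_compose[OF this der[rule_format, of "a + t *\<^sub>R (b - a)"]]
    have "(\<phi> has_derivative (\<lambda>s. (s *\<^sub>R (b - a)) \<bullet> G (a + t *\<^sub>R (b - a)))) (at t)"
      unfolding \<phi>_def o_def by simp
    then show ?thesis
      unfolding has_field_derivative_def
      by (simp add: inner_commute mult_commute_abs)
  qed
  obtain z where z: "0 < z" "z < 1" "\<phi> 1 - \<phi> 0 = (1 - 0) * (G (a + z *\<^sub>R (b - a)) \<bullet> (b - a))"
    using MVT2[of 0 1 \<phi> "\<lambda>t. G (a + t *\<^sub>R (b - a)) \<bullet> (b - a)"] dphi by auto
  have "a + z *\<^sub>R (b - a) \<in> closed_segment a b"
    using z unfolding closed_segment_def
    by (rule_tac CollectI, rule_tac x=z in exI) (auto simp: algebra_simps)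
  then have "G (a + z *\<^sub>R (b - a)) \<bullet> (b - a) \<le> c" using seg bd by blast
  with z show ?thesis unfolding \<phi>_def by simp
qed

lemma geom:
  fixes \<rho> :: "'a::euclidean_space \<Rightarrow> real" and \<Omega> :: "'a set"
  assumes der: "\<forall>z. (\<rho> has_derivative (\<lambda>h. h \<bullet> G z)) (at z)"
    and Gc: "continuous_on UNIV G"
    and Odef: "\<Omega> = {x. \<rho> x < 0}" and bnd: "bounded \<Omega>"
    and nz: "\<forall>x. \<rho> x = 0 \<longrightarrow> G x \<noteq> 0"
  shows "\<exists>\<delta>>0. \<exists>Q. \<forall>x\<in>\<Omega>. \<forall>y\<in>\<Omega>. dist x y < \<delta> \<longrightarrow>
     (\<exists>z1 z2. closed_segment x z1 \<subseteq> \<Omega> \<and> closed_segment z1 z2 \<subseteq> \<Omega> \<and> closed_segment z2 y \<subseteq> \<Omega> \<and>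
        dist x z1 + dist z1 z2 + dist z2 y \<le> Q * dist x y)"
proof -
  have rc: "continuous_on UNIV \<rho>"
    apply (rule continuous_at_imp_continuous_on)
    using der has_derivative_continuous by blast
  have opn: "open \<Omega>" unfolding Odef
    using open_Collect_less[OF rc continuous_on_const[of UNIV 0]] by simp
  define K where "K = frontier \<Omega>"
  have Kcomp: "compact K" unfolding K_def using bnd by blast
  have clo: "closure \<Omega> \<subseteq> {x. \<rho> x \<le> 0}"
    apply (rule closure_minimal)
    unfolding Odef apply force
    using closed_Collect_le[OF rc continuous_on_const[of UNIV 0]] by simp
  have Kz: "\<rho> p = 0" if "p \<in> K" for p
  proof -
    have "p \<in> closure \<Omega>" "p \<notin> \<Omega>" using that opn unfolding K_def frontier_def
      by (auto simp: interior_open)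
    then show ?thesis using clo unfolding Odef by force
  qed
  obtain m where m: "m > 0" "\<forall>p\<in>K. 2 * m \<le> norm (G p)"
  proof (cases "K = {}")
    case True then show ?thesis using that[of 1] by auto
  next
    case False
    have "continuous_on K (\<lambda>p. norm (G p))"
      using Gc by (auto intro!: continuous_intros intro: continuous_on_subset)
    then obtain p0 where p0: "p0 \<in> K" "\<forall>p\<in>K. norm (G p0) \<le> norm (G p)"
      using continuous_attains_inf[OF Kcomp False] by blast
    have "norm (G p0) > 0" using nz Kz[OF p0(1)] by auto
    then show ?thesis using that[of "norm (G p0) / 2"] p0 by auto
  qed
  obtain r0 where r0: "\<forall>p\<in>K. norm p \<le> r0"
    using compact_imp_bounded[OF Kcomp] unfolding bounded_iff by blast
  define T where "T = cball (0::'a) (r0 + 1)"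
  have Tc: "compact T" unfolding T_def by simp
  have "uniformly_continuous_on T G"
    using compact_uniformly_continuous[OF continuous_on_subset[OF Gc] Tc] by simp
  then obtain R0 where R0: "R0 > 0" "\<forall>z\<in>T. \<forall>p\<in>T. dist z p < R0 \<longrightarrow> dist (G z) (G p) < m"
    unfolding uniformly_continuous_on_def using m(1) by metis
  define R where "R = min R0 1"
  have R: "R > 0" "R \<le> 1" "R \<le> R0" using R0 unfolding R_def by auto
  have "compact (G ` T)"
    using compact_continuous_image[OF continuous_on_subset[OF Gc] Tc] by simp
  then have "bounded (G ` T)" by (rule compact_imp_bounded)
  then obtain M where M0: "M > 0" "\<forall>y\<in>G ` T. norm y \<le> M"
    unfolding bounded_pos by blast
  then have M: "M > 0" "\<forall>z\<in>T. norm (G z) \<le> M" by auto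
  define \<delta> where "\<delta> = R / (1 + M / m)"
  define Q where "Q = 1 + 2 * M / m"
  have dpos: "\<delta> > 0" unfolding \<delta>_def using R M m by (simp add: add_pos_pos)
  have Q1: "Q \<ge> 1" unfolding Q_def using M m by simp
  have main: "\<exists>z1 z2. closed_segment x z1 \<subseteq> \<Omega> \<and> closed_segment z1 z2 \<subseteq> \<Omega> \<and> closed_segment z2 y \<subseteq> \<Omega> \<and>
        dist x z1 + dist z1 z2 + dist z2 y \<le> Q * dist x y"
    if x: "x \<in> \<Omega>" and y: "y \<in> \<Omega>" and dxy: "dist x y < \<delta>" for x y
  proof (cases "closed_segment x y \<subseteq> \<Omega>")
    case True
    have "dist x y \<le> Q * dist x y" using mult_right_mono[OF Q1 zero_le_dist[of x y]] by simp
    then show ?thesis using x y True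
      by (rule_tac x=x in exI, rule_tac x=y in exI) (auto simp: dist_commute)
  next
    case False
    define d where "d = dist x y"
    have "closed_segment x y \<inter> frontier \<Omega> \<noteq> {}"
      apply (rule connected_Int_frontier)
      using False x by auto
    then obtain p where p: "p \<in> closed_segment x y" "p \<in> K" unfolding K_def by blast
    have px: "dist p x \<le> d" and py: "dist p y \<le> d"
      using dist_in_closed_segment[OF p(1)] unfolding d_def by auto
    have Gp: "norm (G p) \<ge> 2 * m" using m p by auto
    have pT: "p \<in> T" using r0 p unfolding T_def by auto
    define n where "n = G p /\<^sub>R norm (G p)"
    have Gp0: "norm (G p) > 0" using Gp m by linarith
    have nn: "norm n = 1" unfolding n_def using Gp0 by simp
    have Gpn: "G p \<bullet> n = norm (G p)" unfolding n_def using Gp0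
      by (simp add: power2_norm_eq_inner[symmetric] power2_eq_square)
    define s where "s = M * d / m"
    have s0: "s \<ge> 0" unfolding s_def using M m by (simp add: d_def)
    have ds: "d + s < R"
    proof -
      have "d * (1 + M / m) < R" using dxy R M m unfolding \<delta>_def d_def
        by (simp add: pos_less_divide_eq add_pos_pos)
      then show ?thesis unfolding s_def by (simp add: algebra_simps)
    qed
    define B where "B = ball p R"
    have GB: "G z \<bullet> n \<ge> m \<and> norm (G z) \<le> M" if "z \<in> B" for z
    proof -
      have np: "norm p \<le> r0" using r0 p(2) by blast
      have "norm z \<le> norm p + norm (z - p)" by (rule norm_triangle_sub)
      moreover have "norm (z - p) < R" using that unfolding B_def by (simp add: dist_norm norm_minus_commute)
      ultimately have zT: "z \<in> T" using np R unfolding T_def by simp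
      have "dist z p < R0" using that R unfolding B_def by (simp add: dist_commute)
      then have dG: "norm (G z - G p) < m" using R0 zT pT by (simp add: dist_norm)
      have "G z \<bullet> n = G p \<bullet> n + (G z - G p) \<bullet> n" by (simp add: inner_diff_left)
      moreover have "\<bar>(G z - G p) \<bullet> n\<bar> \<le> norm (G z - G p)"
        using Cauchy_Schwarz_ineq2[of "G z - G p" n] nn by simp
      ultimately have "G z \<bullet> n \<ge> m" using Gpn Gp dG by linarith
      then show ?thesis using M zT by auto
    qed
    define z1 where "z1 = x - s *\<^sub>R n"
    define z2 where "z2 = y - s *\<^sub>R n"
    have xB: "x \<in> B" and yB: "y \<in> B" using px py ds s0 unfolding B_def
      by (auto simp: dist_commute)
    have z1B: "z1 \<in> B" unfolding B_def z1_def
    proof -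
      have "dist p (x - s *\<^sub>R n) \<le> dist p x + dist x (x - s *\<^sub>R n)" by (rule dist_triangle)
      also have "dist x (x - s *\<^sub>R n) = s" using nn s0 by (simp add: dist_norm)
      finally show "x - s *\<^sub>R n \<in> ball p R" using px ds by simp
    qed
    have z2B: "z2 \<in> B" unfolding B_def z2_def
    proof -
      have "dist p (y - s *\<^sub>R n) \<le> dist p y + dist y (y - s *\<^sub>R n)" by (rule dist_triangle)
      also have "dist y (y - s *\<^sub>R n) = s" using nn s0 by (simp add: dist_norm)
      finally show "y - s *\<^sub>R n \<in> ball p R" using py ds by simp
    qed
    have cB: "convex B" unfolding B_def by simp
    have rx: "\<rho> x < 0" and ry: "\<rho> y < 0" using x y Odef by auto
    have leg: "closed_segment a (a - s *\<^sub>R n) \<subseteq> \<Omega>" if aB: "a \<in> B" "a - s *\<^sub>R n \<in> B" and ra: "\<rho> a < 0" for a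
    proof
      fix w assume w: "w \<in> closed_segment a (a - s *\<^sub>R n)"
      then obtain u where u: "0 \<le> u" "u \<le> 1" "w = (1 - u) *\<^sub>R a + u *\<^sub>R (a - s *\<^sub>R n)"
        unfolding closed_segment_def by blast
      have wa: "w - a = - (u * s) *\<^sub>R n" using u(3) by (simp add: algebra_simps)
      have seg: "closed_segment a w \<subseteq> B"
        using closed_segment_subset[OF aB(1) _ cB] w closed_segment_subset[OF aB cB] by blast
      have "\<forall>z\<in>B. G z \<bullet> (w - a) \<le> 0"
      proof
        fix z assume "z \<in> B"
        then have "G z \<bullet> n \<ge> m" using GB by blast
        then have "G z \<bullet> n \<ge> 0" using m by simp
        moreover have "u * s \<ge> 0" using u s0 by simp
        ultimately show "G z \<bullet> (w - a) \<le> 0" unfolding wa by simp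
      qed
      from seg_mvt[OF der seg this] have "\<rho> w \<le> \<rho> a" by simp
      then show "w \<in> \<Omega>" using ra Odef by simp
    qed
    have L1: "closed_segment x z1 \<subseteq> \<Omega>" using leg[OF xB _ rx] z1B unfolding z1_def by simp
    have L3: "closed_segment z2 y \<subseteq> \<Omega>" using leg[OF yB _ ry] z2B unfolding z2_def
      by (simp add: closed_segment_commute)
    have rz1: "\<rho> z1 \<le> \<rho> x - s * m"
    proof -
      have seg: "closed_segment x z1 \<subseteq> B" using closed_segment_subset[OF xB z1B cB] .
      have "\<forall>z\<in>B. G z \<bullet> (z1 - x) \<le> - s * m"
      proof
        fix z assume "z \<in> B"
        then have "G z \<bullet> n \<ge> m" using GB by blast
        then have "s * m \<le> s * (G z \<bullet> n)" using s0 by (simp add: mult_left_mono)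
        then show "G z \<bullet> (z1 - x) \<le> - s * m" unfolding z1_def by simp
      qed
      from seg_mvt[OF der seg this] show ?thesis by simp
    qed
    have L2: "closed_segment z1 z2 \<subseteq> \<Omega>"
    proof
      fix w assume w: "w \<in> closed_segment z1 z2"
      have seg: "closed_segment z1 w \<subseteq> B"
        using closed_segment_subset[OF z1B _ cB] w closed_segment_subset[OF z1B z2B cB] by blast
      have nw: "norm (w - z1) \<le> d"
        using segment_bound1[OF w] unfolding z1_def z2_def d_def by (simp add: dist_norm norm_minus_commute)
      have "\<forall>z\<in>B. G z \<bullet> (w - z1) \<le> M * d"
      proof
        fix z assume "z \<in> B"
        then have "norm (G z) \<le> M" using GB by blast
        have "G z \<bullet> (w - z1) \<le> norm (G z) * norm (w - z1)" by (rule norm_cauchy_schwarz)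
        also have "\<dots> \<le> M * d" using \<open>norm (G z) \<le> M\<close> nw by (simp add: mult_mono')
        finally show "G z \<bullet> (w - z1) \<le> M * d" .
      qed
      from seg_mvt[OF der seg this] have "\<rho> w \<le> \<rho> z1 + M * d" .
      moreover have "s * m = M * d" unfolding s_def using m by simp
      ultimately have "\<rho> w \<le> \<rho> x" using rz1 by linarith
      then show "w \<in> \<Omega>" using rx Odef by simp
    qed
    have "dist x z1 = s" "dist z2 y = s" unfolding z1_def z2_def using nn s0 by (simp_all add: dist_norm)
    moreover have "dist z1 z2 = d" unfolding z1_def z2_def d_def by (simp add: dist_norm)
    ultimately have eq: "dist x z1 + dist z1 z2 + dist z2 y = Q * d"
      unfolding Q_def s_def using m by (simp add: field_simps)
    show ?thesis
      apply (rule exI[of _ z1], rule exI[of _ z2])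
      using L1 L2 L3 eq unfolding d_def by simp
  qed
  show ?thesis using dpos main by blast
qed


lemma seg_lip:
  fixes g :: "'a::euclidean_space \<Rightarrow> real"
  assumes "closed_segment a b \<subseteq> \<Omega>" "\<forall>z\<in>\<Omega>. (g has_derivative g' z) (at z)"
    "\<forall>z\<in>\<Omega>. onorm (g' z) \<le> K"
  shows "\<bar>g b - g a\<bar> \<le> K * dist a b"
proof -
  have "norm (g b - g a) \<le> K * norm (b - a)"
    apply (rule differentiable_bound[OF convex_closed_segment, of a b g g' K])
    using assms by (auto intro: has_derivative_at_withinI)
  then show ?thesis by (simp add: dist_norm norm_minus_commute)
qed

lemma lipschitz_from_geom:
  fixes g :: "'a::euclidean_space \<Rightarrow> real"
  assumes geo: "\<exists>\<delta>>0. \<exists>Q. \<forall>x\<in>\<Omega>. \<forall>y\<in>\<Omega>. dist x y < \<delta> \<longrightarrow>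
     (\<exists>z1 z2. closed_segment x z1 \<subseteq> \<Omega> \<and> closed_segment z1 z2 \<subseteq> \<Omega> \<and> closed_segment z2 y \<subseteq> \<Omega> \<and>
        dist x z1 + dist z1 z2 + dist z2 y \<le> Q * dist x y)"
    and bd: "bounded (g ` \<Omega>)"
    and der: "\<forall>z\<in>\<Omega>. (g has_derivative g' z) (at z)"
    and K: "K \<ge> 0" "\<forall>z\<in>\<Omega>. onorm (g' z) \<le> K"
  shows "\<exists>L. \<forall>x\<in>\<Omega>. \<forall>y\<in>\<Omega>. \<bar>g y - g x\<bar> \<le> L * dist x y"
proof -
  obtain \<delta> Q where dQ: "\<delta> > 0" "\<forall>x\<in>\<Omega>. \<forall>y\<in>\<Omega>. dist x y < \<delta> \<longrightarrow>
     (\<exists>z1 z2. closed_segment x z1 \<subseteq> \<Omega> \<and> closed_segment z1 z2 \<subseteq> \<Omega> \<and> closed_segment z2 y \<subseteq> \<Omega> \<and>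
        dist x z1 + dist z1 z2 + dist z2 y \<le> Q * dist x y)" using geo by blast
  obtain S where S: "S > 0" "\<forall>x\<in>\<Omega>. \<bar>g x\<bar> \<le> S"
    using bd unfolding bounded_pos by auto
  define L where "L = K * \<bar>Q\<bar> + 2 * S / \<delta>"
  have "\<bar>g y - g x\<bar> \<le> L * dist x y" if x: "x \<in> \<Omega>" and y: "y \<in> \<Omega>" for x y
  proof (cases "dist x y < \<delta>")
    case True
    then obtain z1 z2 where z: "closed_segment x z1 \<subseteq> \<Omega>" "closed_segment z1 z2 \<subseteq> \<Omega>"
      "closed_segment z2 y \<subseteq> \<Omega>" "dist x z1 + dist z1 z2 + dist z2 y \<le> Q * dist x y"
      using dQ x y by blast
    have "\<bar>g y - g x\<bar> \<le> \<bar>g z1 - g x\<bar> + \<bar>g z2 - g z1\<bar> + \<bar>g y - g z2\<bar>" by linarith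
    also have "\<dots> \<le> K * dist x z1 + K * dist z1 z2 + K * dist z2 y"
      using seg_lip[OF z(1) der K(2)] seg_lip[OF z(2) der K(2)] seg_lip[OF z(3) der K(2)] by linarith
    also have "\<dots> = K * (dist x z1 + dist z1 z2 + dist z2 y)" by (simp add: algebra_simps)
    also have "\<dots> \<le> K * (\<bar>Q\<bar> * dist x y)"
      apply (rule mult_left_mono[OF _ K(1)])
      using z(4) abs_ge_self[of Q] mult_right_mono[of Q "\<bar>Q\<bar>" "dist x y"] by simp
    also have "\<dots> \<le> L * dist x y" unfolding L_def using S dQ
      by (simp add: algebra_simps)
    finally show ?thesis .
  next
    case False
    have "\<bar>g x\<bar> \<le> S" "\<bar>g y\<bar> \<le> S" using S x y by auto
    then have "\<bar>g y - g x\<bar> \<le> 2 * S" by linarith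
    also have "2 * S \<le> 2 * S / \<delta> * dist x y"
      using False dQ S by (simp add: field_simps)
    also have "\<dots> \<le> L * dist x y"
      unfolding L_def using K(1) by (simp add: algebra_simps)
    finally show ?thesis .
  qed
  then show ?thesis by blast
qed

lemma holder_from_lip:
  fixes g :: "'a::euclidean_space \<Rightarrow> real"
  assumes "bounded \<Omega>" "0 < \<alpha>" "\<alpha> \<le> 1"
    and L: "\<forall>x\<in>\<Omega>. \<forall>y\<in>\<Omega>. \<bar>g y - g x\<bar> \<le> L * dist x y"
  shows "\<exists>C. \<forall>x\<in>\<Omega>. \<forall>y\<in>\<Omega>. \<bar>g y - g x\<bar> \<le> C * dist y x powr \<alpha>"
proof -
  obtain e where e: "e > 0" "\<forall>x\<in>\<Omega>. norm x \<le> e" using assms(1) unfolding bounded_pos by blast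
  define D where "D = 2 * e"
  define L' where "L' = max L 0"
  have "\<bar>g y - g x\<bar> \<le> (L' * D powr (1 - \<alpha>)) * dist y x powr \<alpha>" if x: "x \<in> \<Omega>" and y: "y \<in> \<Omega>" for x y
  proof (cases "x = y")
    case True then show ?thesis by simp
  next
    case False
    define d where "d = dist y x"
    have d0: "d > 0" using False unfolding d_def by simp
    have "norm x \<le> e" "norm y \<le> e" using e x y by auto
    then have dD: "d \<le> D" unfolding d_def D_def dist_norm
      using norm_triangle_ineq4[of y x] by linarith
    have "\<bar>g y - g x\<bar> \<le> L' * d" using L x y unfolding L'_def d_def
      by (metis dist_commute max.cobounded1 mult_right_mono order_trans zero_le_dist)
    also have "d = d powr (1 - \<alpha>) * d powr \<alpha>" using d0 by (simp add: powr_add[symmetric])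
    also have "L' * (d powr (1 - \<alpha>) * d powr \<alpha>) \<le> L' * (D powr (1 - \<alpha>) * d powr \<alpha>)"
      apply (rule mult_left_mono)
       apply (rule mult_right_mono)
      using powr_mono2[of "1 - \<alpha>" d D] d0 dD assms(3) unfolding L'_def by auto
    finally show ?thesis unfolding d_def by (simp add: mult.assoc)
  qed
  then show ?thesis by blast
qed

lemma dpart_zero: "dpart bs (\<lambda>x::'a::euclidean_space. 0) = (\<lambda>x. 0)"
proof (induction bs)
  case Nil then show ?case by simp
next
  case (Cons b bs)
  have "frechet_derivative (\<lambda>x::'a. 0::real) (at x) = (\<lambda>h. 0)" for x
    using frechet_derivative_at[OF has_derivative_const[of "0::real" "at x"]] by simp
  then show ?case using Cons by simp
qed

lemma holder_zero: "holder_space \<Omega> k \<alpha> (\<lambda>x::'a::euclidean_space. 0)"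
  unfolding holder_space_def dpart_zero
  by (auto intro!: exI[of _ 0] intro: bounded_subset[of "{0}"])

lemma mpart_ex:
  assumes "\<beta> \<in> mindices j"
  shows "\<exists>xs. mpart \<beta> w = dpart xs w \<and> set xs \<subseteq> Basis \<and> length xs = j"
proof -
  define xs where "xs = (SOME xs. mset xs = \<beta>)"
  have "mset xs = \<beta>" unfolding xs_def using ex_mset[of \<beta>] by (rule someI_ex)
  have b: "set_mset \<beta> \<subseteq> Basis" "size \<beta> = j" using assms by (simp_all add: mindices_def)
  have "set xs = set_mset \<beta>" "length xs = size \<beta>"
    by (subst \<open>mset xs = \<beta>\<close>[symmetric], simp)+
  then have "set xs \<subseteq> Basis" "length xs = j" using b by simp_all
  moreover have "mpart \<beta> w = dpart xs w" unfolding mpart_def xs_def ..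
  ultimately show ?thesis by blast
qed

lemma supnorm_nonneg:
  assumes "bounded (g ` \<Omega>)" "x0 \<in> \<Omega>"
  shows "0 \<le> supnorm \<Omega> g"
proof -
  obtain b where b: "\<forall>x\<in>\<Omega>. norm (g x) \<le> b" using assms(1) unfolding bounded_pos by auto
  have "bdd_above ((\<lambda>x. \<bar>g x\<bar>) ` \<Omega>)" using b by (auto intro!: bdd_aboveI2)
  then show ?thesis unfolding supnorm_def
    by (rule cSUP_upper2[OF _ assms(2)]) simp
qed

lemma hsemi_nonneg:
  fixes g :: "'a::euclidean_space \<Rightarrow> real"
  assumes "\<forall>x\<in>\<Omega>. \<forall>y\<in>\<Omega>. \<bar>g y - g x\<bar> \<le> C * dist y x powr \<alpha>"
    "x0 \<in> \<Omega>" "x1 \<in> \<Omega>" "x0 \<noteq> x1"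
  shows "0 \<le> hseminorm \<Omega> \<alpha> g"
proof -
  let ?P = "{(x, y). x \<in> \<Omega> \<and> y \<in> \<Omega> \<and> x \<noteq> y}"
  have "\<bar>g (snd p) - g (fst p)\<bar> / dist (snd p) (fst p) powr \<alpha> \<le> C" if "p \<in> ?P" for p
  proof -
    have "dist (snd p) (fst p) > 0" using that by auto
    then have "dist (snd p) (fst p) powr \<alpha> > 0" by simp
    then show ?thesis using assms(1) that by (auto simp: divide_le_eq)
  qed
  then have "bdd_above ((\<lambda>p. \<bar>g (snd p) - g (fst p)\<bar> / dist (snd p) (fst p) powr \<alpha>) ` ?P)"
    by (auto intro!: bdd_aboveI2)
  then show ?thesis unfolding hseminorm_def
    by (rule cSUP_upper2[of _ _ "(x0, x1)"]) (use assms in auto)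
qed

lemma hnorm_nonneg:
  fixes w :: "'a::euclidean_space \<Rightarrow> real"
  assumes bd: "\<forall>xs. set xs \<subseteq> Basis \<and> length xs \<le> k \<longrightarrow> bounded (dpart xs w ` \<Omega>)"
    and hd: "\<forall>xs. set xs \<subseteq> Basis \<and> length xs = k \<longrightarrow>
        (\<exists>C. \<forall>x\<in>\<Omega>. \<forall>y\<in>\<Omega>. \<bar>dpart xs w y - dpart xs w x\<bar> \<le> C * dist y x powr \<alpha>)"
    and pts: "x0 \<in> \<Omega>" "x1 \<in> \<Omega>" "x0 \<noteq> x1"
  shows "0 \<le> hnorm \<Omega> k \<alpha> w"
proof -
  have a: "0 \<le> supnorm \<Omega> (mpart \<beta> w)" if a0: "\<beta> \<in> mindices j" "j \<le> k" for \<beta> j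
  proof -
    obtain xs where "mpart \<beta> w = dpart xs w" "set xs \<subseteq> Basis" "length xs = j"
      using mpart_ex[OF a0(1)] by blast
    then show ?thesis using supnorm_nonneg[OF _ pts(1)] bd a0(2) by auto
  qed
  have b: "0 \<le> hseminorm \<Omega> \<alpha> (mpart \<beta> w)" if b0: "\<beta> \<in> mindices k" for \<beta>
  proof -
    obtain xs where xs: "mpart \<beta> w = dpart xs w" "set xs \<subseteq> Basis" "length xs = k"
      using mpart_ex[OF b0] by blast
    then obtain C where "\<forall>x\<in>\<Omega>. \<forall>y\<in>\<Omega>. \<bar>dpart xs w y - dpart xs w x\<bar> \<le> C * dist y x powr \<alpha>"
      using hd by blast
    then show ?thesis using hsemi_nonneg[OF _ pts] xs(1) by auto
  qed
  show ?thesis unfolding hnorm_def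
    using a b by (intro add_nonneg_nonneg sum_nonneg) auto
qed


lemma first_holder:
  fixes w :: "'a::euclidean_space \<Rightarrow> real"
  assumes bsd: "bounded_smooth_domain \<Omega>" and al: "0 < \<alpha>" "\<alpha> \<le> 1"
    and w: "holder_space \<Omega> 2 \<alpha> w" and b: "b \<in> Basis"
  shows "\<exists>C. \<forall>x\<in>\<Omega>. \<forall>y\<in>\<Omega>. \<bar>dpart [b] w y - dpart [b] w x\<bar> \<le> C * dist y x powr \<alpha>"
proof -
  obtain \<rho> where rho: "smooth_fun \<rho>" "\<Omega> = {x. \<rho> x < 0}" "\<forall>x. \<rho> x = 0 \<longrightarrow> grad \<rho> x \<noteq> 0"
    and bnd: "bounded \<Omega>"
    using bsd unfolding bounded_smooth_domain_def by blast
  have rdiff: "\<rho> differentiable at z" for z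
    using rho(1) unfolding smooth_fun_def by (metis dpart.simps(1) empty_subsetI list.set(1))
  have rder: "\<forall>z. (\<rho> has_derivative (\<lambda>h. h \<bullet> grad \<rho> z)) (at z)"
  proof
    fix z
    have eq: "(\<lambda>h. \<Sum>c\<in>Basis. (h \<bullet> c) * dpart [c] \<rho> z) = (\<lambda>h. h \<bullet> grad \<rho> z)"
      by (rule ext) (simp add: grad_def inner_sum_right mult.commute)
    show "(\<rho> has_derivative (\<lambda>h. h \<bullet> grad \<rho> z)) (at z)"
      using deriv_repr[OF rdiff[of z]] unfolding eq .
  qed
  have cc: "continuous_on UNIV (dpart [c] \<rho>)" if "c \<in> Basis" for c
  proof -
    have "dpart [c] \<rho> differentiable at z" for z
      using rho(1) that unfolding smooth_fun_def by (metis empty_subsetI insert_subset list.set(1) list.set(2))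
    then show ?thesis
      by (intro continuous_at_imp_continuous_on ballI differentiable_imp_continuous_within)
  qed
  have geq: "grad \<rho> = (\<lambda>x. \<Sum>c\<in>Basis. dpart [c] \<rho> x *\<^sub>R c)"
    by (rule ext, rule grad_def)
  have Gc: "continuous_on UNIV (grad \<rho>)" unfolding geq
    by (intro continuous_on_sum continuous_on_scaleR continuous_on_const ballI cc)
  have geo: "\<exists>\<delta>>0. \<exists>Q. \<forall>x\<in>\<Omega>. \<forall>y\<in>\<Omega>. dist x y < \<delta> \<longrightarrow>
     (\<exists>z1 z2. closed_segment x z1 \<subseteq> \<Omega> \<and> closed_segment z1 z2 \<subseteq> \<Omega> \<and> closed_segment z2 y \<subseteq> \<Omega> \<and>
        dist x z1 + dist z1 z2 + dist z2 y \<le> Q * dist x y)"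
    using geom[OF rder Gc rho(2) bnd rho(3)] .
  define g where "g = dpart [b] w"
  have wd: "\<forall>bs. set bs \<subseteq> Basis \<and> length bs < 2 \<longrightarrow> (\<forall>x\<in>\<Omega>. dpart bs w differentiable (at x))"
    and wb: "\<forall>bs. set bs \<subseteq> Basis \<and> length bs \<le> 2 \<longrightarrow> bounded (dpart bs w ` \<Omega>)"
    using w unfolding holder_space_def by auto
  have gdiff: "g differentiable at z" if "z \<in> \<Omega>" for z
    using wd[rule_format, of "[b]"] b that unfolding g_def by simp
  have gb: "bounded (g ` \<Omega>)" using wb[rule_format, of "[b]"] b unfolding g_def by simp
  have eqc: "dpart [c] g = dpart [c, b] w" for c :: 'a unfolding g_def by simp
  have "\<forall>c\<in>Basis. \<exists>k>0. \<forall>z\<in>\<Omega>. \<bar>dpart [c, b] w z\<bar> \<le> k"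
  proof
    fix c :: 'a assume c: "c \<in> Basis"
    have "bounded (dpart [c, b] w ` \<Omega>)" using wb[rule_format, of "[c, b]"] b c by simp
    then show "\<exists>k>0. \<forall>z\<in>\<Omega>. \<bar>dpart [c, b] w z\<bar> \<le> k" unfolding bounded_pos by auto
  qed
  then obtain kf where kf: "\<forall>c\<in>Basis. kf c > 0 \<and> (\<forall>z\<in>\<Omega>. \<bar>dpart [c, b] w z\<bar> \<le> kf c)"
    by metis
  define K where "K = (\<Sum>c\<in>Basis. kf c)"
  have K0: "K \<ge> 0" unfolding K_def using kf by (simp add: sum_nonneg less_imp_le)
  define g' where "g' z = (\<lambda>h. \<Sum>c\<in>Basis. (h \<bullet> c) * dpart [c, b] w z)" for z
  have gder: "\<forall>z\<in>\<Omega>. (g has_derivative g' z) (at z)"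
    using deriv_repr[OF gdiff] unfolding g'_def eqc by blast
  have gon: "\<forall>z\<in>\<Omega>. onorm (g' z) \<le> K"
  proof
    fix z assume z: "z \<in> \<Omega>"
    show "onorm (g' z) \<le> K"
    proof (rule onorm_le)
      fix h :: 'a
      have "norm (g' z h) \<le> (\<Sum>c\<in>Basis. \<bar>(h \<bullet> c) * dpart [c, b] w z\<bar>)"
        unfolding g'_def real_norm_def by (rule sum_abs)
      also have "\<dots> \<le> (\<Sum>c\<in>Basis. norm h * kf c)"
      proof (rule sum_mono)
        fix c :: 'a assume c: "c \<in> Basis"
        have "\<bar>h \<bullet> c\<bar> \<le> norm h" using Basis_le_norm[OF c] .
        moreover have "\<bar>dpart [c, b] w z\<bar> \<le> kf c" using kf c z by blast
        ultimately show "\<bar>(h \<bullet> c) * dpart [c, b] w z\<bar> \<le> norm h * kf c"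
          unfolding abs_mult by (rule mult_mono) auto
      qed
      also have "\<dots> = K * norm h" unfolding K_def by (simp add: sum_distrib_left mult.commute)
      finally show "norm (g' z h) \<le> K * norm h" .
    qed
  qed
  obtain L where "\<forall>x\<in>\<Omega>. \<forall>y\<in>\<Omega>. \<bar>g y - g x\<bar> \<le> L * dist x y"
    using lipschitz_from_geom[OF geo gb gder K0 gon] by blast
  from holder_from_lip[OF bnd al this] show ?thesis unfolding g_def .
qed

theorem mainTheorem6:
  fixes \<Omega> :: "'a::euclidean_space set" and \<alpha> \<Lambda> :: real
    and f :: "'a \<Rightarrow> real \<Rightarrow> 'a \<Rightarrow> real" and u :: "nat \<Rightarrow> 'a \<Rightarrow> real"
    and \<psi> :: "real \<Rightarrow> real"
  assumes "bounded_smooth_domain \<Omega>"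
    and "0 < \<alpha>" and "\<alpha> < 1"
    and "schauder_constant \<Omega> \<alpha> \<Lambda>"
    and "dirichlet_iteration \<Omega> \<alpha> f (\<lambda>x. 0) u"
    and "bounded (\<psi> ` {0..})" and "mono_on {0..} \<psi>"
    and "\<forall>w. holder_space \<Omega> 2 \<alpha> w \<longrightarrow>
           holder_space \<Omega> 0 \<alpha> (\<lambda>x. f x (w x) (grad w x)) \<and>
           hnorm \<Omega> 0 \<alpha> (\<lambda>x. f x (w x) (grad w x)) \<le> \<psi> (hnorm \<Omega> 1 \<alpha> w)"
    and "\<exists>t\<ge>0. \<Lambda> * \<psi> t = t"
  shows "\<exists>M. \<forall>i. hnorm \<Omega> 2 \<alpha> (u i) \<le> M"
proof -
  note bsd = assms(1)
  have al: "0 < \<alpha>" "\<alpha> \<le> 1" using assms(2,3) by auto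
  have sch: "\<And>g v. holder_space \<Omega> 0 \<alpha> g \<Longrightarrow> dirichlet_solution \<Omega> \<alpha> g v \<Longrightarrow>
        hnorm \<Omega> 2 \<alpha> v \<le> \<Lambda> * hnorm \<Omega> 0 \<alpha> g"
    using assms(4) unfolding schauder_constant_def by blast
  have u0: "u 0 = (\<lambda>x. 0)"
    and us: "\<And>i. dirichlet_solution \<Omega> \<alpha> (\<lambda>x. f x (u i x) (grad (u i) x)) (u (Suc i))"
    using assms(5) unfolding dirichlet_iteration_def by auto
  have hyp: "\<And>w. holder_space \<Omega> 2 \<alpha> w \<Longrightarrow>
           holder_space \<Omega> 0 \<alpha> (\<lambda>x. f x (w x) (grad w x)) \<and>
           hnorm \<Omega> 0 \<alpha> (\<lambda>x. f x (w x) (grad w x)) \<le> \<psi> (hnorm \<Omega> 1 \<alpha> w)"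
    using assms(8) by blast
  obtain Bp where Bp: "Bp > 0" "\<forall>y\<in>\<psi> ` {0..}. norm y \<le> Bp"
    using assms(6) unfolding bounded_pos by blast
  have psiB: "\<psi> t \<le> Bp" if "t \<ge> 0" for t using Bp(2) that by force
  have opn: "open \<Omega>" and ne: "\<Omega> \<noteq> {}" using bsd unfolding bounded_smooth_domain_def by auto
  obtain x0 where x0: "x0 \<in> \<Omega>" using ne by blast
  obtain e where e: "e > 0" "ball x0 e \<subseteq> \<Omega>" using opn x0 open_contains_ball by blast
  obtain b0 :: 'a where b0: "b0 \<in> Basis" using nonempty_Basis by blast
  define x1 where "x1 = x0 + (e / 2) *\<^sub>R b0"
  have dx: "dist x0 x1 = e / 2" unfolding x1_def using b0 e by (simp add: dist_norm)
  have x1: "x1 \<in> \<Omega>" using e dx by (auto simp: subset_iff)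
  have x01: "x0 \<noteq> x1" using dx e by auto
  have hol2: "holder_space \<Omega> 2 \<alpha> (u i)" for i
  proof (cases i)
    case 0 then show ?thesis using u0 holder_zero by simp
  next
    case (Suc j) then show ?thesis using us[of j] unfolding dirichlet_solution_def by simp
  qed
  have h1: "0 \<le> hnorm \<Omega> 1 \<alpha> w" if w: "holder_space \<Omega> 2 \<alpha> w" for w
  proof (rule hnorm_nonneg[OF _ _ x0 x1 x01])
    show "\<forall>xs. set xs \<subseteq> Basis \<and> length xs \<le> 1 \<longrightarrow> bounded (dpart xs w ` \<Omega>)"
      using w unfolding holder_space_def by auto
    show "\<forall>xs. set xs \<subseteq> Basis \<and> length xs = 1 \<longrightarrow>
        (\<exists>C. \<forall>x\<in>\<Omega>. \<forall>y\<in>\<Omega>. \<bar>dpart xs w y - dpart xs w x\<bar> \<le> C * dist y x powr \<alpha>)"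
    proof (intro allI impI)
      fix xs :: "'a list" assume xs: "set xs \<subseteq> Basis \<and> length xs = 1"
      then obtain b where "xs = [b]" by (metis One_nat_def length_0_conv length_Suc_conv)
      with xs have "xs = [b]" "b \<in> Basis" by auto
      then show "\<exists>C. \<forall>x\<in>\<Omega>. \<forall>y\<in>\<Omega>. \<bar>dpart xs w y - dpart xs w x\<bar> \<le> C * dist y x powr \<alpha>"
        using first_holder[OF bsd al w] by simp
    qed
  qed
  have step: "hnorm \<Omega> 2 \<alpha> (u (Suc i)) \<le> \<bar>\<Lambda>\<bar> * Bp" for i
  proof -
    define g where "g = (\<lambda>x. f x (u i x) (grad (u i) x))"
    have g0: "holder_space \<Omega> 0 \<alpha> g" and gle: "hnorm \<Omega> 0 \<alpha> g \<le> \<psi> (hnorm \<Omega> 1 \<alpha> (u i))"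
      using hyp[OF hol2[of i]] unfolding g_def by auto
    have "hnorm \<Omega> 0 \<alpha> g \<le> Bp" using gle psiB[OF h1[OF hol2[of i]]] by linarith
    moreover have "0 \<le> hnorm \<Omega> 0 \<alpha> g"
      apply (rule hnorm_nonneg[OF _ _ x0 x1 x01])
      using g0 unfolding holder_space_def by auto
    moreover have "hnorm \<Omega> 2 \<alpha> (u (Suc i)) \<le> \<Lambda> * hnorm \<Omega> 0 \<alpha> g"
      using sch[OF g0] us[of i] unfolding g_def by blast
    ultimately show ?thesis
      by (smt (verit) abs_ge_self mult_left_mono mult_right_mono abs_ge_zero)
  qed
  show ?thesis
  proof (rule exI[of _ "max (hnorm \<Omega> 2 \<alpha> (u 0)) (\<bar>\<Lambda>\<bar> * Bp)"], rule allI)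
    fix i show "hnorm \<Omega> 2 \<alpha> (u i) \<le> max (hnorm \<Omega> 2 \<alpha> (u 0)) (\<bar>\<Lambda>\<bar> * Bp)"
      using step by (cases i) (simp_all add: le_max_iff_disj)
  qed
qed

end
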